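(* Let $D\ge 2$ be a fixed integer. For odd $n$, let $M_3(n,D)$ be the maximum size of a set of words of length $n$ over $\{\mathtt A,\mathtt T,\mathtt C,\mathtt G\}$ that is both mutually uncorrelated and $D$-GC-prefix-balanced. Then, as $n\to\infty$ over odd integers, \[ M_3(n,D)\;\ge\;\frac{2^{n-1}}{D}\,\tan^2\!\frac{\pi}{D}\,\cos^{\,n-1}\!\frac{\pi}{D}\,(1+o(1)). \]
   Context: A set $S$ of words of length $n$ over an alphabet is mutually uncorrelated if for all $X,Y\in S$ (including $X=Y$) and every $1\le k\le n-1$, the suffix of $X$ of length $k$ is not equal to the prefix of $Y$ of length $k$ (equivalently, every word in $S$ is self-uncorrelated, i.e. no proper nonempty prefix equals a suffix of itself, and no proper nonempty prefix of one word of $S$ equals a suffix of another word of $S$). For $D>0$, a word over $\{\mathtt A,\mathtt T,\mathtt C,\mathtt G\}$ is $D$-GC-prefix-balanced if for every prefix of it (including the whole word), the absolute difference between the number of symbols from $\{\mathtt G,\mathtt C\}$ and the number of symbols from $\{\mathtt A,\mathtt T\}$ in that prefix is at most $D$; a set is $D$-GC-prefix-balanced if all its words are. *)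

theory Defs
  imports Complex_Main
begin

datatype nuc = A | T | C | G

definition words :: "nat \<Rightarrow> nuc list set" where
  "words n = {w. length w = n}"

definition mutually_uncorrelated :: "nat \<Rightarrow> nuc list set \<Rightarrow> bool" where
  "mutually_uncorrelated n S \<longleftrightarrow>
     (\<forall>X\<in>S. \<forall>Y\<in>S. \<forall>k. 1 \<le> k \<and> k \<le> n - 1 \<longrightarrow> drop (n - k) X \<noteq> take k Y)"

definition gc_count :: "nuc list \<Rightarrow> int" where
  "gc_count w = int (length (filter (\<lambda>x. x = G \<or> x = C) w))"

definition at_count :: "nuc list \<Rightarrow> int" where
  "at_count w = int (length (filter (\<lambda>x. x = A \<or> x = T) w))"

definition gc_prefix_balanced :: "nat \<Rightarrow> nuc list \<Rightarrow> bool" where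
  "gc_prefix_balanced D w \<longleftrightarrow>
     (\<forall>i\<le>length w. \<bar>gc_count (take i w) - at_count (take i w)\<bar> \<le> int D)"

definition M3 :: "nat \<Rightarrow> nat \<Rightarrow> nat" where
  "M3 n D = Max {card S | S. S \<subseteq> words n \<and> mutually_uncorrelated n S
                          \<and> (\<forall>w\<in>S. gc_prefix_balanced D w)}"

end

theory Submission
  imports Defs
begin

definition P :: "nat \<Rightarrow> nuc set" where
  "P i = (if i = 0 \<or> odd i then {G, C} else {A, T})"

definition g :: "nat \<Rightarrow> bool \<Rightarrow> nuc" where
  "g i b = (if i = 0 \<or> odd i then (if b then G else C) else (if b then A else T))"

definition enc :: "bool list \<Rightarrow> nuc list" where
  "enc bs = map (\<lambda>i. g i (bs ! i)) [0..<length bs]"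

lemma enc_len[simp]: "length (enc bs) = length bs"
  by (simp add: enc_def)

lemma enc_nth: "i < length bs \<Longrightarrow> enc bs ! i = g i (bs ! i)"
  by (simp add: enc_def)

lemma g_inj: "g i a = g i b \<Longrightarrow> a = b"
  by (auto simp: g_def split: if_splits)

lemma enc_inj: "inj_on enc {bs. length bs = n}"
proof (rule inj_onI)
  fix x y assume x: "x \<in> {bs. length bs = n}" and y: "y \<in> {bs. length bs = n}" and e: "enc x = enc y"
  show "x = y"
  proof (rule nth_equalityI)
    show "length x = length y" using x y by simp
    fix i assume "i < length x"
    then have "enc x ! i = enc y ! i" using e by simp
    then have "g i (x ! i) = g i (y ! i)" using \<open>i < length x\<close> x y by (simp add: enc_nth)
    then show "x ! i = y ! i" by (rule g_inj)
  qed
qed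

lemma card_S0: "card (enc ` {bs :: bool list. length bs = n}) = 2 ^ n"
proof -
  have "card {bs :: bool list. length bs = n} = 2 ^ n"
    using card_lists_length_eq[of "UNIV :: bool set" n] by simp
  then show ?thesis using card_image[OF enc_inj[of n]] by simp
qed

lemma S0_prop: "w \<in> enc ` {bs. length bs = n} \<Longrightarrow> length w = n \<and> (\<forall>i<n. w ! i \<in> P i)"
  by (auto simp: enc_nth g_def P_def split: if_splits)

lemma gc_snoc: "gc_count (xs @ [x]) = gc_count xs + (if x = G \<or> x = C then 1 else 0)"
  by (simp add: gc_count_def)

lemma at_snoc: "at_count (xs @ [x]) = at_count xs + (if x = A \<or> x = T then 1 else 0)"
  by (simp add: at_count_def)

lemma bal_formula:
  assumes "\<forall>i<length w. w ! i \<in> P i" "i \<le> length w"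
  shows "gc_count (take i w) - at_count (take i w) = (if i = 0 then 0 else if odd i then 1 else 2)"
  using assms(2)
proof (induction i)
  case 0
  then show ?case by (simp add: gc_count_def at_count_def)
next
  case (Suc i)
  have il: "i < length w" using Suc.prems by simp
  have tk: "take (Suc i) w = take i w @ [w ! i]" using il by (simp add: take_Suc_conv_app_nth)
  have IH: "gc_count (take i w) - at_count (take i w) = (if i = 0 then 0 else if odd i then 1 else 2)"
    using Suc.IH il by simp
  have wi: "w ! i \<in> P i" using assms(1) il by simp
  show ?case
  proof (cases "i = 0 \<or> odd i")
    case True
    then have "w ! i = G \<or> w ! i = C" using wi by (auto simp: P_def)
    then show ?thesis using IH True unfolding tk gc_snoc at_snoc by auto
  next
    case False
    then have "w ! i = A \<or> w ! i = T" using wi by (auto simp: P_def)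
    then show ?thesis using IH False unfolding tk gc_snoc at_snoc by auto
  qed
qed

lemma S0_bal:
  assumes "D \<ge> 2" "w \<in> enc ` {bs. length bs = n}"
  shows "gc_prefix_balanced D w"
  unfolding gc_prefix_balanced_def
proof (intro allI impI)
  fix i assume i: "i \<le> length w"
  have "\<forall>i<length w. w ! i \<in> P i" using S0_prop[OF assms(2)] by simp
  from bal_formula[OF this i] show "\<bar>gc_count (take i w) - at_count (take i w)\<bar> \<le> int D"
    using assms(1) by auto
qed

lemma S0_mu:
  assumes "odd n"
  shows "mutually_uncorrelated n (enc ` {bs. length bs = n})"
  unfolding mutually_uncorrelated_def
proof (intro ballI allI impI notI)
  fix X Y k
  assume X: "X \<in> enc ` {bs. length bs = n}" and Y: "Y \<in> enc ` {bs. length bs = n}"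
    and k: "1 \<le> k \<and> k \<le> n - 1" and e: "drop (n - k) X = take k Y"
  have Xp: "length X = n" "\<forall>i<n. X ! i \<in> P i" using S0_prop[OF X] by auto
  have Yp: "length Y = n" "\<forall>i<n. Y ! i \<in> P i" using S0_prop[OF Y] by auto
  have e0: "X ! (n - k) = Y ! 0"
  proof -
    have "drop (n - k) X ! 0 = take k Y ! 0" using e by simp
    then show ?thesis using k Xp(1) by simp
  qed
  have e1: "X ! (n - 1) = Y ! (k - 1)"
  proof -
    have "drop (n - k) X ! (k - 1) = take k Y ! (k - 1)" using e by simp
    moreover have "n - k + (k - 1) = n - 1" using k by linarith
    ultimately show ?thesis using k Xp(1) by simp
  qed
  have y0: "Y ! 0 \<in> {G, C}" using Yp(2)[rule_format, of 0] k by (auto simp: P_def)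
  show False
  proof (cases "odd (n - k)")
    case False
    have "n - k \<noteq> 0" using k by linarith
    moreover have "n - k < n" using k by linarith
    ultimately have "X ! (n - k) \<in> {A, T}" using Xp(2) False unfolding P_def by (metis (full_types))
    then show False using e0 y0 by auto
  next
    case True
    have nk: "n = (n - k) + k" using k by linarith
    have "even k" using True assms by (subst (asm) nk) (simp add: even_add)
    then have ok: "odd (k - 1)" using k by simp
    have "k - 1 < n" using k by linarith
    then have yk: "Y ! (k - 1) \<in> {G, C}" using Yp(2) ok unfolding P_def by (metis (full_types))
    have "even (n - 1)" using assms by simp
    moreover have "n - 1 \<noteq> 0" "n - 1 < n" using k by linarith+
    ultimately have "X ! (n - 1) \<in> {A, T}" using Xp(2) unfolding P_def by (metis (full_types))
    then show False using e1 yk by auto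
  qed
qed

lemma finite_words: "finite (words n)"
proof -
  have U: "(UNIV :: nuc set) = {A, T, C, G}" by (auto intro: nuc.exhaust)
  have f: "finite (UNIV :: nuc set)" by (simp only: U finite_insert finite.emptyI)
  have "words n = {xs. set xs \<subseteq> UNIV \<and> length xs = n}" by (simp add: words_def)
  then show ?thesis using finite_lists_length_eq[OF f, of n] by simp
qed

lemma M3_ge:
  assumes "D \<ge> 2" "odd n"
  shows "2 ^ n \<le> M3 n D"
proof -
  let ?F = "{card S | S. S \<subseteq> words n \<and> mutually_uncorrelated n S \<and> (\<forall>w\<in>S. gc_prefix_balanced D w)}"
  have fin: "finite ?F"
  proof -
    have "?F \<subseteq> card ` Pow (words n)" by auto
    then show ?thesis using finite_words by (meson finite_Pow_iff finite_imageI finite_subset)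
  qed
  have "enc ` {bs. length bs = n} \<subseteq> words n" using S0_prop by (auto simp: words_def)
  then have "card (enc ` {bs. length bs = n}) \<in> ?F"
    using S0_mu[OF assms(2)] S0_bal[OF assms(1)] by blast
  then have "card (enc ` {bs. length bs = n}) \<le> M3 n D" unfolding M3_def using fin by (rule Max_ge[rotated])
  then show ?thesis using card_S0 by simp
qed

lemma tan_cos_bound:
  assumes "n \<ge> 3"
  shows "(tan (x::real))\<^sup>2 * (cos x) ^ (n - 1) \<le> 1"
proof (cases "cos x = 0")
  case True
  then show ?thesis using assms by (simp add: tan_def)
next
  case False
  have "(tan x)\<^sup>2 * (cos x) ^ (n - 1) = (sin x)\<^sup>2 * (cos x) ^ (n - 3)"
  proof -
    have "(cos x) ^ (n - 1) = (cos x)\<^sup>2 * (cos x) ^ (n - 3)"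
    proof -
      have "n - 1 = 2 + (n - 3)" using assms by linarith
      then show ?thesis by (simp only: power_add)
    qed
    then show ?thesis using False by (simp add: tan_def power_divide)
  qed
  also have "\<dots> \<le> (sin x)\<^sup>2 * 1"
  proof (rule mult_left_mono)
    have "\<bar>cos x\<bar> ^ (n - 3) \<le> 1" by (rule power_le_one) (simp_all add: abs_cos_le_one)
    then show "(cos x) ^ (n - 3) \<le> 1" by (metis abs_le_D1 power_abs)
  qed simp
  also have "\<dots> \<le> 1" by (simp add: abs_square_le_1)
  finally show ?thesis .
qed

theorem theorem4:
  fixes D :: nat
  assumes "D \<ge> 2"
  shows "\<exists>e :: nat \<Rightarrow> real. (e \<longlonglongrightarrow> 0) \<and>
           (\<forall>n. odd n \<longrightarrow>
              real (M3 n D) \<ge> 2 ^ (n - 1) / real D * (tan (pi / real D))\<^sup>2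
                               * (cos (pi / real D)) ^ (n - 1) * (1 + e n))"
proof (intro exI conjI allI impI)
  let ?e = "\<lambda>n::nat. if n \<le> 1 then -1 else (0::real)"
  show "?e \<longlonglongrightarrow> 0"
  proof (rule LIMSEQ_offset[where k = 2])
    show "(\<lambda>n. ?e (n + 2)) \<longlonglongrightarrow> 0" by simp
  qed
  fix n :: nat assume n: "odd n"
  show "real (M3 n D) \<ge> 2 ^ (n - 1) / real D * (tan (pi / real D))\<^sup>2
                               * (cos (pi / real D)) ^ (n - 1) * (1 + ?e n)"
  proof (cases "n \<le> 1")
    case True
    then show ?thesis by simp
  next
    case False
    then have n3: "n \<ge> 3" using n by presburger
    have b: "(tan (pi / real D))\<^sup>2 * (cos (pi / real D)) ^ (n - 1) \<le> 1" by (rule tan_cos_bound[OF n3])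
    have D1: "real D \<ge> 1" using assms by simp
    have "2 ^ (n - 1) / real D * (tan (pi / real D))\<^sup>2 * (cos (pi / real D)) ^ (n - 1) * (1 + ?e n)
        = 2 ^ (n - 1) / real D * ((tan (pi / real D))\<^sup>2 * (cos (pi / real D)) ^ (n - 1))"
      using False by simp
    also have "\<dots> \<le> 2 ^ (n - 1) / real D * 1"
      by (rule mult_left_mono[OF b]) simp
    also have "\<dots> \<le> 2 ^ (n - 1)" using D1 by (simp add: divide_le_eq)
    also have "\<dots> \<le> 2 ^ n" by simp
    also have "\<dots> \<le> real (M3 n D)" using M3_ge[OF assms n] by (metis of_nat_le_iff of_nat_numeral of_nat_power)
    finally show ?thesis .
  qed
qed

end
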